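(* Let $n,m,k$ be integers with $n\geq m\geq 1$, $k\geq 3$ and $n\leq 6m+6$. Then $$ gr_{k}(K_{3} : S(n, m))\leq \begin{cases} 2n+m(k+3)+8 & \text{ if $n$ is even,}\\ 2n+m(k+3)+9 & \text{ if $n$ is odd.} \end{cases} $$
   Context: For integers $n\geq m\geq 0$, the double star $S(n,m)$ is the graph obtained from the disjoint union of the stars $K_{1,n}$ and $K_{1,m}$ by adding an edge between their centers. A $k$-coloring of a graph is an assignment of one of $k$ colors to each edge. A subgraph is rainbow if all its edges have distinct colors and monochromatic if all its edges have the same color. For graphs $G,H$ and a positive integer $k$, the Gallai–Ramsey number $gr_k(G:H)$ is the minimum integer $N$ such that every $k$-coloring of the edges of the complete graph $K_N$ contains either a rainbow copy of $G$ or a monochromatic copy of $H$. *)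

theory Defs
  imports Main
begin

definition kcoloring :: "nat \<Rightarrow> nat \<Rightarrow> (nat \<Rightarrow> nat \<Rightarrow> nat) \<Rightarrow> bool" where
  "kcoloring k N c \<longleftrightarrow>
     (\<forall>i<N. \<forall>j<N. i \<noteq> j \<longrightarrow> c i j = c j i \<and> c i j < k)"

definition has_rainbow_K3 :: "nat \<Rightarrow> (nat \<Rightarrow> nat \<Rightarrow> nat) \<Rightarrow> bool" where
  "has_rainbow_K3 N c \<longleftrightarrow>
     (\<exists>x<N. \<exists>y<N. \<exists>z<N. x \<noteq> y \<and> y \<noteq> z \<and> x \<noteq> z \<and>
        c x y \<noteq> c y z \<and> c y z \<noteq> c x z \<and> c x y \<noteq> c x z)"

definition has_mono_double_star :: "nat \<Rightarrow> nat \<Rightarrow> nat \<Rightarrow> (nat \<Rightarrow> nat \<Rightarrow> nat) \<Rightarrow> bool" where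
  "has_mono_double_star n m N c \<longleftrightarrow>
     (\<exists>u v A B col. u < N \<and> v < N \<and> u \<noteq> v \<and>
        A \<subseteq> {0..<N} \<and> B \<subseteq> {0..<N} \<and> card A = n \<and> card B = m \<and>
        A \<inter> B = {} \<and> u \<notin> A \<union> B \<and> v \<notin> A \<union> B \<and>
        c u v = col \<and> (\<forall>a\<in>A. c u a = col) \<and> (\<forall>b\<in>B. c v b = col))"

definition gr_K3_double_star :: "nat \<Rightarrow> nat \<Rightarrow> nat \<Rightarrow> nat" where
  "gr_K3_double_star k n m =
     (LEAST N. \<forall>c. kcoloring k N c \<longrightarrow> has_rainbow_K3 N c \<or> has_mono_double_star n m N c)"

end

theory Submission
  imports Defs
begin


definition gal :: "'a set \<Rightarrow> ('a \<Rightarrow> 'a \<Rightarrow> nat) \<Rightarrow> bool" where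
  "gal V c \<longleftrightarrow> (\<forall>x\<in>V. \<forall>y\<in>V. x \<noteq> y \<longrightarrow> c x y = c y x) \<and>
     (\<forall>x\<in>V. \<forall>y\<in>V. \<forall>z\<in>V. x \<noteq> y \<longrightarrow> y \<noteq> z \<longrightarrow> x \<noteq> z \<longrightarrow>
        c x y = c y z \<or> c y z = c x z \<or> c x y = c x z)"

definition E :: "nat \<Rightarrow> 'a set \<Rightarrow> ('a \<Rightarrow> 'a \<Rightarrow> nat) \<Rightarrow> 'a \<Rightarrow> 'a \<Rightarrow> bool" where
  "E i V c x y \<longleftrightarrow> x \<in> V \<and> y \<in> V \<and> x \<noteq> y \<and> c x y = i"

definition L :: "nat \<Rightarrow> 'a set \<Rightarrow> ('a \<Rightarrow> 'a \<Rightarrow> nat) \<Rightarrow> 'a \<Rightarrow> 'a \<Rightarrow> bool" where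
  "L i V c = (E i V c)\<^sup>*\<^sup>*"

definition conn :: "nat \<Rightarrow> 'a set \<Rightarrow> ('a \<Rightarrow> 'a \<Rightarrow> nat) \<Rightarrow> bool" where
  "conn i V c \<longleftrightarrow> (\<exists>x\<in>V. \<exists>y\<in>V. x \<noteq> y \<and> c x y = i) \<and> (\<forall>x\<in>V. \<forall>y\<in>V. L i V c x y)"

definition module :: "'a set \<Rightarrow> ('a \<Rightarrow> 'a \<Rightarrow> nat) \<Rightarrow> 'a set \<Rightarrow> bool" where
  "module V c W \<longleftrightarrow> W \<subseteq> V \<and> (\<forall>z\<in>V - W. \<forall>x\<in>W. \<forall>y\<in>W. c z x = c z y)"

lemma gal_sym: "gal V c \<Longrightarrow> x \<in> V \<Longrightarrow> y \<in> V \<Longrightarrow> x \<noteq> y \<Longrightarrow> c x y = c y x"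
  unfolding gal_def by blast

lemma gal_tri: "gal V c \<Longrightarrow> x \<in> V \<Longrightarrow> y \<in> V \<Longrightarrow> z \<in> V \<Longrightarrow> x \<noteq> y \<Longrightarrow> y \<noteq> z \<Longrightarrow> x \<noteq> z
   \<Longrightarrow> c x y = c y z \<or> c y z = c x z \<or> c x y = c x z"
  unfolding gal_def by blast

lemma gal_subset: "gal V c \<Longrightarrow> W \<subseteq> V \<Longrightarrow> gal W c"
  unfolding gal_def by blast

lemma L_refl: "L i V c x x"
  unfolding L_def by simp

lemma L_trans: "L i V c x y \<Longrightarrow> L i V c y z \<Longrightarrow> L i V c x z"
  unfolding L_def by (rule rtranclp_trans)

lemma L_edge: "x \<in> V \<Longrightarrow> y \<in> V \<Longrightarrow> x \<noteq> y \<Longrightarrow> c x y = i \<Longrightarrow> L i V c x y"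
  unfolding L_def E_def by (rule r_into_rtranclp) simp

lemma L_sym: assumes "gal V c" "L i V c x y" shows "L i V c y x"
proof -
  have "symp (E i V c)" unfolding symp_def E_def using gal_sym[OF assms(1)] by metis
  then have "symp ((E i V c)\<^sup>*\<^sup>*)" by (rule symp_rtranclp)
  then show ?thesis using assms(2) unfolding L_def by (meson sympD)
qed

lemma L_in: assumes "L i V c x y" "x \<in> V" shows "y \<in> V"
  using assms unfolding L_def by (induction rule: rtranclp_induct) (auto simp: E_def)

lemma L_first: assumes "L i V c x y" "x \<noteq> y" shows "\<exists>z. E i V c x z"
  using assms unfolding L_def by (induction rule: converse_rtranclp_induct) auto

lemma L_module:
  assumes g: "gal V c" and l: "L i V c x u" and x: "x \<in> V" and w: "w \<in> V" and nl: "\<not> L i V c x w"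
  shows "c u w = c x w"
  using l unfolding L_def
proof (induction rule: rtranclp_induct)
  case base
  then show ?case by simp
next
  case (step u u')
  have uV: "u \<in> V" "u' \<in> V" "u \<noteq> u'" "c u u' = i" using step(2) unfolding E_def by auto
  have lu0: "L i V c x u" using step(1) unfolding L_def by auto
  have lu': "L i V c x u'" using step(1,2) unfolding L_def by auto
  have "w \<noteq> u" using lu0 nl by auto
  have "w \<noteq> u'" using lu' nl by auto
  have "c u w \<noteq> i"
  proof
    assume "c u w = i"
    then have "L i V c u w" using L_edge uV(1) w \<open>w \<noteq> u\<close> by metis
    then show False using lu0 nl L_trans by metis
  qed
  have "c u' w \<noteq> i"
  proof
    assume "c u' w = i"
    then have "L i V c u' w" using L_edge uV(2) w \<open>w \<noteq> u'\<close> by metis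
    then show False using lu' nl L_trans by metis
  qed
  have "c u u' = c u' w \<or> c u' w = c u w \<or> c u u' = c u w"
    using gal_tri[OF g uV(1,2) w uV(3) \<open>w \<noteq> u'\<close>[symmetric] \<open>w \<noteq> u\<close>[symmetric]] .
  then have "c u' w = c u w" using uV(4) \<open>c u w \<noteq> i\<close> \<open>c u' w \<noteq> i\<close> by auto
  then show ?case using step(3) by simp
qed



lemma two_elems: assumes "2 \<le> card A" shows "\<exists>x\<in>A. \<exists>y\<in>A. x \<noteq> y"
proof (rule ccontr)
  assume "\<not> ?thesis"
  moreover have "finite A" using assms by (metis card.infinite not_numeral_le_zero)
  ultimately have "card A \<le> Suc 0" using card_le_Suc0_iff_eq by blast
  then show False using assms by simp
qed

lemma F1:
  assumes g: "gal V c" and cn: "conn i V c" and v: "v \<in> V" and x: "x \<in> V" "x \<noteq> v"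
  shows "\<exists>u. L i (V - {v}) c x u \<and> u \<in> V - {v} \<and> c u v = i"
proof -
  have inv: "L i (V - {v}) c x w \<or> (\<exists>u. L i (V - {v}) c x u \<and> u \<in> V - {v} \<and> c u v = i)"
    if "L i V c x w" for w
    using that unfolding L_def
  proof (induction rule: rtranclp_induct)
    case base
    then show ?case by simp
  next
    case (step w w')
    show ?case
    proof (cases "(E i (V - {v}) c)\<^sup>*\<^sup>* x w")
      case True
      have wV: "w \<in> V - {v}" using L_in[of i "V - {v}" c x w] True x unfolding L_def by auto
      show ?thesis
      proof (cases "w' = v")
        case True
        then show ?thesis using \<open>(E i (V - {v}) c)\<^sup>*\<^sup>* x w\<close> wV step(2) unfolding E_def L_def by auto
      next
        case False
        then have "E i (V - {v}) c w w'" using step(2) wV unfolding E_def by auto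
        then show ?thesis using True unfolding L_def by auto
      qed
    next
      case False
      then show ?thesis using step(3) unfolding L_def by auto
    qed
  qed
  have "L i V c x v" using cn x v unfolding conn_def by auto
  from inv[OF this] show ?thesis using L_in[of i "V - {v}" c x v] x by auto
qed

lemma conn_edge_at:
  assumes cn: "conn i V c" and v: "v \<in> V" and x: "x \<in> V" "x \<noteq> v"
  shows "\<exists>y\<in>V - {v}. c v y = i"
proof -
  have "L i V c v x" using cn v x unfolding conn_def by auto
  then obtain z where "E i V c v z" using L_first x(2) by metis
  then show ?thesis unfolding E_def by auto
qed

lemma H:
  assumes g: "gal V c" and fin: "finite V" and cn: "conn i V c" and ncn: "\<not> conn i (V - {v}) c"
    and v: "v \<in> V" and c3: "card V \<ge> 3"
  shows "\<exists>\<gamma>. \<forall>z\<in>V - {v}. c v z = i \<or> c v z = \<gamma>"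
proof -
  define V' where "V' = V - {v}"
  define L' where "L' = L i V' c"
  have g': "gal V' c" using gal_subset[OF g] unfolding V'_def by auto
  have cV': "card V' \<ge> 2" using c3 fin v unfolding V'_def by auto
  have F3: "\<exists>x\<in>V'. \<exists>y\<in>V'. \<not> L' x y"
  proof (cases "\<exists>x\<in>V'. \<exists>y\<in>V'. x \<noteq> y \<and> c x y = i")
    case True
    then show ?thesis using ncn unfolding conn_def L'_def V'_def by blast
  next
    case False
    obtain x y where xy: "x \<in> V'" "y \<in> V'" "x \<noteq> y"
      using two_elems[OF cV'] by blast
    have "\<not> L' x y"
    proof
      assume "L' x y"
      then obtain z where "E i V' c x z" using L_first xy(3) unfolding L'_def by metis
      then show False using False unfolding E_def by auto
    qed
    then show ?thesis using xy by auto
  qed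
  have C1: "c z w = c v z" if z: "z \<in> V'" "c v z \<noteq> i" and w: "w \<in> V'" "\<not> L' z w" for z w
  proof -
    obtain u where u: "L' w u" "u \<in> V'" "c u v = i" using F1[OF g cn v] w(1) unfolding V'_def L'_def by auto
    have nzu: "\<not> L' z u" using u(1) w(2) L_trans L_sym[OF g'] unfolding L'_def by metis
    have "z \<noteq> u" using nzu L_refl unfolding L'_def by metis
    have "c z u \<noteq> i"
    proof
      assume "c z u = i"
      then have "L' z u" using L_edge z(1) u(2) \<open>z \<noteq> u\<close> unfolding L'_def by metis
      then show False using nzu by simp
    qed
    have vz: "v \<noteq> z" "v \<noteq> u" using z(1) u(2) unfolding V'_def by auto
    have zV: "z \<in> V" "u \<in> V" using z(1) u(2) unfolding V'_def by auto
    have "c v z = c z u \<or> c z u = c v u \<or> c v z = c v u"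
      using gal_tri[OF g v zV(1) zV(2) vz(1) \<open>z \<noteq> u\<close> vz(2)] .
    moreover have "c v u = i" using u(3) gal_sym[OF g zV(2) v] vz(2) by auto
    ultimately have e1: "c z u = c v z" using \<open>c z u \<noteq> i\<close> z(2) by auto
    have "\<not> L' w z" using w(2) L_sym[OF g'] unfolding L'_def by metis
    then have "c u z = c w z" using L_module[OF g' _ w(1) z(1)] u(1) unfolding L'_def by metis
    have "z \<noteq> w" using w(2) L_refl unfolding L'_def by metis
    have "c z w = c w z" using gal_sym[OF g' z(1) w(1) \<open>z \<noteq> w\<close>] .
    also have "\<dots> = c u z" using \<open>c u z = c w z\<close> by simp
    also have "\<dots> = c z u" using gal_sym[OF g' u(2) z(1)] \<open>z \<noteq> u\<close> by auto
    finally show ?thesis using e1 by simp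
  qed
  show ?thesis
  proof (cases "\<exists>z0\<in>V'. c v z0 \<noteq> i")
    case False
    then show ?thesis unfolding V'_def by auto
  next
    case True
    then obtain z0 where z0: "z0 \<in> V'" "c v z0 \<noteq> i" by auto
    have "c v z = c v z0" if z: "z \<in> V'" "c v z \<noteq> i" for z
    proof (cases "L' z0 z")
      case False
      have "\<not> L' z z0" using False L_sym[OF g'] unfolding L'_def by metis
      have "z \<noteq> z0" using False L_refl unfolding L'_def by metis
      have "c z0 z = c v z0" using C1[OF z0 z(1) False] .
      moreover have "c z z0 = c v z" using C1[OF z z0(1) \<open>\<not> L' z z0\<close>] .
      moreover have "c z0 z = c z z0" using gal_sym[OF g' z0(1) z(1)] \<open>z \<noteq> z0\<close> by auto
      ultimately show ?thesis by simp
    next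
      case True
      obtain x y where xy: "x \<in> V'" "y \<in> V'" "\<not> L' x y" using F3 by auto
      obtain w where w: "w \<in> V'" "\<not> L' z0 w"
        using xy L_trans L_sym[OF g'] unfolding L'_def by metis
      have nzw: "\<not> L' z w" using True w(2) L_trans unfolding L'_def by metis
      have "c z0 w = c v z0" using C1[OF z0 w] .
      moreover have "c z w = c v z" using C1[OF z w(1) nzw] .
      moreover have "c z w = c z0 w" using L_module[OF g' _ z0(1) w(1)] True w(2) unfolding L'_def by metis
      ultimately show ?thesis by simp
    qed
    then show ?thesis unfolding V'_def by blast
  qed
qed



lemma M3:
  assumes "finite V" "gal V c" "a \<noteq> b" "b \<noteq> e" "a \<noteq> e" "conn a V c" "conn b V c" "conn e V c"
  shows False
  using assms
proof (induction "card V" arbitrary: V rule: less_induct)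
  case less
  obtain x y where xy: "x \<in> V" "y \<in> V" "x \<noteq> y" "c x y = a" using less.prems(6) unfolding conn_def by auto
  obtain x' y' where xy': "x' \<in> V" "y' \<in> V" "x' \<noteq> y'" "c x' y' = b" using less.prems(7) unfolding conn_def by auto
  have c3: "card V \<ge> 3"
  proof (rule ccontr)
    assume "\<not> card V \<ge> 3"
    then have "card V \<le> 2" by simp
    moreover have "card {x, y} = 2" using xy by simp
    moreover have "{x, y} \<subseteq> V" using xy by simp
    ultimately have "V = {x, y}" using less.prems(1) by (metis card_subset_eq le_antisym card_mono)
    then have "(x' = x \<and> y' = y) \<or> (x' = y \<and> y' = x)" using xy' by auto
    then show False using xy xy' gal_sym[OF less.prems(2)] less.prems(3) by metis
  qed
  then obtain v where v: "v \<in> V" by fastforce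
  have lt: "card (V - {v}) < card V" using v less.prems(1) by (meson card_Diff1_less)
  have g': "gal (V - {v}) c" using gal_subset[OF less.prems(2)] by blast
  have "\<not> (conn a (V - {v}) c \<and> conn b (V - {v}) c \<and> conn e (V - {v}) c)"
    using less.hyps[OF lt _ g' less.prems(3,4,5)] less.prems(1) by blast
  then obtain f where f: "f \<in> {a, b, e}" "\<not> conn f (V - {v}) c" by blast
  have cf: "conn f V c" using f less.prems(6,7,8) by blast
  obtain \<gamma> where gam: "\<forall>z\<in>V - {v}. c v z = f \<or> c v z = \<gamma>"
    using H[OF less.prems(2,1) cf f(2) v c3] by blast
  obtain h where h: "h \<in> {a, b, e}" "h \<noteq> f" "h \<noteq> \<gamma>" using f less.prems(3,4,5) by blast
  have ch: "conn h V c" using h less.prems(6,7,8) by blast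
  obtain w where w: "w \<in> V" "w \<noteq> v"
    using xy by blast
  obtain z where "z \<in> V - {v}" "c v z = h" using conn_edge_at[OF ch v w] by blast
  then show False using gam h by metis
qed

theorem gallai_partition:
  assumes "finite V" "card V \<ge> 2" "gal V c"
  shows "\<exists>P r b. finite P \<and> card P \<ge> 2 \<and> \<Union>P = V \<and> (\<forall>p\<in>P. p \<noteq> {} \<and> module V c p) \<and>
     (\<forall>p\<in>P. \<forall>q\<in>P. p \<noteq> q \<longrightarrow> p \<inter> q = {}) \<and>
     (\<forall>p\<in>P. \<forall>q\<in>P. p \<noteq> q \<longrightarrow> (\<forall>x\<in>p. \<forall>y\<in>q. c x y = r \<or> c x y = b))"
  using assms
proof (induction "card V" arbitrary: V rule: less_induct)
  case less
  note fin = less.prems(1) and g = less.prems(3)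
  show ?case
  proof (cases "\<exists>r b. \<forall>x\<in>V. \<forall>y\<in>V. x \<noteq> y \<longrightarrow> c x y = r \<or> c x y = b")
    case True
    then obtain r b where rb: "\<forall>x\<in>V. \<forall>y\<in>V. x \<noteq> y \<longrightarrow> c x y = r \<or> c x y = b" by blast
    define P where "P = (\<lambda>x. {x}) ` V"
    have f0: "card P = card V" unfolding P_def by (rule card_image) (auto simp: inj_on_def)
    have f1: "finite P" unfolding P_def using fin by simp
    have f3: "\<Union>P = V" unfolding P_def by auto
    have f4: "\<forall>p\<in>P. p \<noteq> {} \<and> module V c p" unfolding P_def module_def by auto
    have f5: "\<forall>p\<in>P. \<forall>q\<in>P. p \<noteq> q \<longrightarrow> p \<inter> q = {}" unfolding P_def by auto
    have f6: "\<forall>p\<in>P. \<forall>q\<in>P. p \<noteq> q \<longrightarrow> (\<forall>x\<in>p. \<forall>y\<in>q. c x y = r \<or> c x y = b)"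
      unfolding P_def using rb by auto
    have f2: "card P \<ge> 2" using f0 less.prems(2) by simp
    show ?thesis
      by (rule exI[where x=P], rule exI[where x=r], rule exI[where x=b]) (intro conjI f1 f2 f3 f4 f5 f6)
  next
    case False
    obtain x1 y1 where e1: "x1 \<in> V" "y1 \<in> V" "x1 \<noteq> y1"
      using two_elems[OF less.prems(2)] by blast
    define a where "a = c x1 y1"
    have "\<not> (\<forall>x\<in>V. \<forall>y\<in>V. x \<noteq> y \<longrightarrow> c x y = a \<or> c x y = a)"
      using False by (intro notI) (rule False[THEN notE], rule exI[where x=a], rule exI[where x=a])
    then obtain x2 y2 where e2: "x2 \<in> V" "y2 \<in> V" "x2 \<noteq> y2" "c x2 y2 \<noteq> a"
      by auto
    define b where "b = c x2 y2"
    have "\<not> (\<forall>x\<in>V. \<forall>y\<in>V. x \<noteq> y \<longrightarrow> c x y = a \<or> c x y = b)"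
      using False by (intro notI) (rule False[THEN notE], rule exI[where x=a], rule exI[where x=b])
    then obtain x3 y3 where e3: "x3 \<in> V" "y3 \<in> V" "x3 \<noteq> y3" "c x3 y3 \<noteq> a" "c x3 y3 \<noteq> b"
      by auto
    define e where "e = c x3 y3"
    have "\<not> (conn a V c \<and> conn b V c \<and> conn e V c)"
      using M3[OF fin g, of a b e] e2 e3 unfolding b_def e_def by auto
    then obtain gc where gc: "gc \<in> {a, b, e}" "\<not> conn gc V c" by blast
    obtain x0 y0 where ed: "x0 \<in> V" "y0 \<in> V" "x0 \<noteq> y0" "c x0 y0 = gc"
      using gc(1) e1 e2 e3 unfolding a_def b_def e_def by blast
    have "\<exists>x\<in>V. \<exists>y\<in>V. \<not> L gc V c x y" using gc(2) ed unfolding conn_def by blast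
    then obtain xn yn where nl: "xn \<in> V" "yn \<in> V" "\<not> L gc V c xn yn" by blast
    define LL where "LL = L gc V c"
    define rep where "rep x = (SOME y. y \<in> {z. LL x z})" for x
    have rep1: "LL x (rep x)" for x
      unfolding rep_def mem_Collect_eq by (rule someI[where x=x]) (simp add: LL_def L_refl)
    have rep2: "rep x = rep y" if "LL x y" for x y
    proof -
      have "{z. LL x z} = {z. LL y z}" using that L_trans L_sym[OF g] unfolding LL_def by metis
      then show ?thesis unfolding rep_def by simp
    qed
    have rep3: "LL x y" if "rep x = rep y" for x y
      using rep1[of x] rep1[of y] that L_trans L_sym[OF g] unfolding LL_def by metis
    have repV: "rep x \<in> V" if "x \<in> V" for x using L_in rep1 that unfolding LL_def by metis
    define Rep where "Rep = rep ` V"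
    have RepV: "Rep \<subseteq> V" unfolding Rep_def using repV by auto
    have "\<not> inj_on rep V"
    proof
      assume "inj_on rep V"
      moreover have "rep x0 = rep y0" using rep2 L_edge[of x0 V y0 c gc, OF ed] unfolding LL_def by metis
      ultimately show False using ed inj_on_def by metis
    qed
    then have ltc: "card Rep < card V" unfolding Rep_def
      using card_image_le[OF fin, of rep] inj_on_iff_eq_card[OF fin, of rep] by linarith
    have "rep xn \<noteq> rep yn" using rep3 nl unfolding LL_def by metis
    have finR: "finite Rep" using RepV fin finite_subset by blast
    have "{rep xn, rep yn} \<subseteq> Rep" unfolding Rep_def using nl by auto
    then have "card {rep xn, rep yn} \<le> card Rep" using card_mono[OF finR] by blast
    then have c2: "card Rep \<ge> 2" using \<open>rep xn \<noteq> rep yn\<close> by simp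
    have gR: "gal Rep c" using gal_subset[OF g RepV] .
    obtain Q r b2 where Q: "finite Q" "card Q \<ge> 2" "\<Union>Q = Rep" "\<forall>p\<in>Q. p \<noteq> {} \<and> module Rep c p"
      "\<forall>p\<in>Q. \<forall>q\<in>Q. p \<noteq> q \<longrightarrow> p \<inter> q = {}"
      "\<forall>p\<in>Q. \<forall>q\<in>Q. p \<noteq> q \<longrightarrow> (\<forall>x\<in>p. \<forall>y\<in>q. c x y = r \<or> c x y = b2)"
      using less.hyps[OF ltc finR c2 gR] by (elim exE conjE) (rule that; assumption)
    have K: "c x y = c (rep x) (rep y)" if xy: "x \<in> V" "y \<in> V" "rep x \<noteq> rep y" for x y
    proof -
      have nxy: "\<not> LL x y" using rep2 xy(3) by metis
      have "c (rep x) y = c x y" using L_module[OF g _ xy(1) xy(2)] rep1 nxy unfolding LL_def by metis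
      have "\<not> LL y (rep x)" using nxy rep1[of x] L_trans L_sym[OF g] unfolding LL_def by metis
      then have "c (rep y) (rep x) = c y (rep x)"
        using L_module[OF g _ xy(2) repV[OF xy(1)]] rep1 unfolding LL_def by metis
      have "x \<noteq> y" using xy(3) by auto
      have "rep x \<noteq> y" using \<open>\<not> LL y (rep x)\<close> L_refl unfolding LL_def by metis
      have "rep y \<noteq> rep x" using xy(3) by auto
      have "c x y = c (rep x) y" using \<open>c (rep x) y = c x y\<close> by simp
      also have "\<dots> = c y (rep x)" using gal_sym[OF g repV[OF xy(1)] xy(2) \<open>rep x \<noteq> y\<close>] .
      also have "\<dots> = c (rep y) (rep x)" using \<open>c (rep y) (rep x) = c y (rep x)\<close> by simp
      also have "\<dots> = c (rep x) (rep y)" using gal_sym[OF g repV[OF xy(2)] repV[OF xy(1)] \<open>rep y \<noteq> rep x\<close>] .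
      finally show ?thesis .
    qed
    define part where "part q = {x \<in> V. rep x \<in> q}" for q
    define P where "P = part ` Q"
    have inj: "inj_on part Q"
    proof (rule inj_onI)
      fix q q' assume qq: "q \<in> Q" "q' \<in> Q" "part q = part q'"
      obtain y where y: "y \<in> q" using Q(4) qq(1) by blast
      then have "y \<in> Rep" using Q(3) qq(1) by blast
      then obtain x where x: "x \<in> V" "rep x = y" unfolding Rep_def by blast
      then have "x \<in> part q" unfolding part_def using y by simp
      then have "rep x \<in> q'" using qq(3) unfolding part_def by simp
      then show "q = q'" using Q(5) qq x y by blast
    qed
    have f0: "card P = card Q" unfolding P_def using card_image[OF inj] .
    have f1: "finite P" unfolding P_def using Q(1) by simp
    have f3: "\<Union>P = V"
    proof
      show "\<Union>P \<subseteq> V" unfolding P_def part_def by auto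
      show "V \<subseteq> \<Union>P"
      proof
        fix x assume x: "x \<in> V"
        then have "rep x \<in> \<Union>Q" using Q(3) unfolding Rep_def by blast
        then obtain q where "q \<in> Q" "rep x \<in> q" by blast
        then show "x \<in> \<Union>P" unfolding P_def part_def using x by blast
      qed
    qed
    have f4: "\<forall>p\<in>P. p \<noteq> {} \<and> module V c p"
    proof
      fix p assume "p \<in> P"
      then obtain q where q: "q \<in> Q" "p = part q" unfolding P_def by blast
      obtain y where y: "y \<in> q" using Q(4) q(1) by blast
      then have "y \<in> Rep" using Q(3) q(1) by blast
      then obtain x where x: "x \<in> V" "rep x = y" unfolding Rep_def by blast
      have ne: "p \<noteq> {}" using x y q unfolding part_def by auto
      have "module V c p" unfolding module_def
      proof (intro conjI ballI)
        show "p \<subseteq> V" using q unfolding part_def by auto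
      next
        fix z u w assume z: "z \<in> V - p" and u: "u \<in> p" and w: "w \<in> p"
        have zV: "z \<in> V" "rep z \<notin> q" using z q unfolding part_def by auto
        have uV: "u \<in> V" "rep u \<in> q" using u q unfolding part_def by auto
        have wV: "w \<in> V" "rep w \<in> q" using w q unfolding part_def by auto
        have "c z u = c (rep z) (rep u)" using K zV uV by metis
        also have "\<dots> = c (rep z) (rep w)"
        proof -
          have "module Rep c q" using Q(4) q(1) by blast
          moreover have "rep z \<in> Rep - q" using zV unfolding Rep_def by auto
          ultimately show ?thesis using uV(2) wV(2) unfolding module_def by blast
        qed
        also have "\<dots> = c z w" using K zV wV by metis
        finally show "c z u = c z w" .
      qed
      then show "p \<noteq> {} \<and> module V c p" using ne by blast
    qed
    have f5: "\<forall>p\<in>P. \<forall>p'\<in>P. p \<noteq> p' \<longrightarrow> p \<inter> p' = {}"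
    proof (intro ballI impI)
      fix p p' assume pp: "p \<in> P" "p' \<in> P" "p \<noteq> p'"
      obtain q q' where qq: "q \<in> Q" "q' \<in> Q" "p = part q" "p' = part q'" using pp unfolding P_def by blast
      have "q \<noteq> q'" using qq pp(3) by blast
      then have "q \<inter> q' = {}" using Q(5) qq(1,2) by blast
      then show "p \<inter> p' = {}" unfolding qq(3,4) part_def by blast
    qed
    have f6: "\<forall>p\<in>P. \<forall>p'\<in>P. p \<noteq> p' \<longrightarrow> (\<forall>x\<in>p. \<forall>y\<in>p'. c x y = r \<or> c x y = b2)"
    proof (intro ballI impI)
      fix p p' x y assume pp: "p \<in> P" "p' \<in> P" "p \<noteq> p'" and xy: "x \<in> p" "y \<in> p'"
      obtain q q' where qq: "q \<in> Q" "q' \<in> Q" "p = part q" "p' = part q'" using pp unfolding P_def by blast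
      have "q \<noteq> q'" using qq pp(3) by blast
      have r: "rep x \<in> q" "rep y \<in> q'" "x \<in> V" "y \<in> V" using xy qq unfolding part_def by auto
      have "q \<inter> q' = {}" using Q(5) qq(1,2) \<open>q \<noteq> q'\<close> by blast
      then have "rep x \<noteq> rep y" using r(1,2) by (metis IntI empty_iff)
      then have "c x y = c (rep x) (rep y)" using K r by metis
      moreover have "\<forall>x\<in>q. \<forall>y\<in>q'. c x y = r \<or> c x y = b2" using Q(6) qq(1,2) \<open>q \<noteq> q'\<close> by blast
      ultimately show "c x y = r \<or> c x y = b2" using r(1,2) by simp
    qed
    have f2: "card P \<ge> 2" using f0 Q(2) by simp
    show ?thesis
      by (rule exI[where x=P], rule exI[where x=r], rule exI[where x=b2]) (intro conjI f1 f2 f3 f4 f5 f6)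
  qed
qed



definition nb :: "'a set \<Rightarrow> ('a \<Rightarrow> 'a \<Rightarrow> nat) \<Rightarrow> 'a \<Rightarrow> nat \<Rightarrow> 'a set" where
  "nb V c x i = {y \<in> V. y \<noteq> x \<and> c x y = i}"

definition star_in :: "nat \<Rightarrow> nat \<Rightarrow> 'a set \<Rightarrow> ('a \<Rightarrow> 'a \<Rightarrow> nat) \<Rightarrow> bool" where
  "star_in n m V c \<longleftrightarrow> (\<exists>u v A B i. u \<in> V \<and> v \<in> V \<and> u \<noteq> v \<and> A \<subseteq> V \<and> B \<subseteq> V \<and>
     card A = n \<and> card B = m \<and> A \<inter> B = {} \<and> u \<notin> A \<union> B \<and> v \<notin> A \<union> B \<and>
     c u v = i \<and> (\<forall>a\<in>A. c u a = i) \<and> (\<forall>b\<in>B. c v b = i))"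

lemma star_mono: assumes "star_in n m W c" "W \<subseteq> V" shows "star_in n m V c"
proof -
  obtain u v A B i where h: "u \<in> W \<and> v \<in> W \<and> u \<noteq> v \<and> A \<subseteq> W \<and> B \<subseteq> W \<and>
     card A = n \<and> card B = m \<and> A \<inter> B = {} \<and> u \<notin> A \<union> B \<and> v \<notin> A \<union> B \<and>
     c u v = i \<and> (\<forall>a\<in>A. c u a = i) \<and> (\<forall>b\<in>B. c v b = i)" using assms(1) unfolding star_in_def by blast
  show ?thesis unfolding star_in_def
    apply (rule exI[where x=u], rule exI[where x=v], rule exI[where x=A], rule exI[where x=B], rule exI[where x=i])
    using h assms(2) by blast
qed

lemma star2:
  assumes fin: "finite V" and uv: "u \<in> V" "v \<in> V" "u \<noteq> v" "c u v = i"
    and AB: "A' \<subseteq> V" "B' \<subseteq> V" "\<forall>a\<in>A'. c u a = i" "\<forall>b\<in>B'. c v b = i" "A' \<inter> B' = {}"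
      "u \<notin> A' \<union> B'" "v \<notin> A' \<union> B'" "card A' \<ge> n" "card B' \<ge> m"
  shows "star_in n m V c"
proof -
  obtain A where A: "A \<subseteq> A'" "card A = n" using obtain_subset_with_card_n AB(8) by metis
  obtain B where B: "B \<subseteq> B'" "card B = m" using obtain_subset_with_card_n AB(9) by metis
  show ?thesis unfolding star_in_def
    apply (rule exI[where x=u], rule exI[where x=v], rule exI[where x=A], rule exI[where x=B], rule exI[where x=i])
    using A B AB uv by blast
qed

lemma nb_fin: "finite V \<Longrightarrow> finite (nb V c x i)"
  unfolding nb_def by simp

lemma nb_sub: "nb V c x i \<subseteq> V"
  unfolding nb_def by auto

lemma star1:
  assumes fin: "finite V" and uv: "u \<in> V" "v \<in> V" "u \<noteq> v" "c u v = i"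
    and du: "card (nb V c u i) \<ge> n + m + 1" and dv: "card (nb V c v i) \<ge> m + 1"
  shows "star_in n m V c"
proof -
  have "card (nb V c v i - {u}) \<ge> m" using dv diff_card_le_card_Diff[of "{u}" "nb V c v i"] nb_fin[OF fin] by simp
  then obtain B where B: "B \<subseteq> nb V c v i - {u}" "card B = m" using obtain_subset_with_card_n by metis
  define A' where "A' = nb V c u i - {v} - B"
  have "card (nb V c u i - {v}) \<ge> n + m" using du diff_card_le_card_Diff[of "{v}" "nb V c u i"] nb_fin[OF fin] by simp
  then have "card A' \<ge> n" unfolding A'_def using diff_card_le_card_Diff[of B "nb V c u i - {v}"] B(2)
    B(1) fin finite_subset nb_sub by (metis add_diff_cancel_right' diff_le_mono finite_Diff le_trans)
  show ?thesis
    apply (rule star2[where c=c and i=i and A'=A' and B'=B, OF fin uv])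
    using B \<open>card A' \<ge> n\<close> unfolding A'_def nb_def by auto
qed



lemma core:
  assumes fin: "finite V" and g: "gal V c" and ns: "\<not> star_in n m V c"
    and P1: "finite P" and P2: "card P \<ge> 2" and P3: "\<Union>P = V"
    and P4: "\<forall>p\<in>P. p \<noteq> {} \<and> module V c p"
    and P5: "\<forall>p\<in>P. \<forall>q\<in>P. p \<noteq> q \<longrightarrow> p \<inter> q = {}"
    and P6: "\<forall>p\<in>P. \<forall>q\<in>P. p \<noteq> q \<longrightarrow> (\<forall>x\<in>p. \<forall>y\<in>q. c x y = r \<or> c x y = b)"
    and small: "\<forall>p\<in>P. card p \<le> n" and big: "card V \<ge> 2*n+3*m+4" and nm: "n \<le> 6*m+6"
  shows False
proof -
  define N where "N = card V"
  have pV: "p \<subseteq> V" if "p \<in> P" for p using that P3 by blast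
  have pfin: "finite p" if "p \<in> P" for p using pV[OF that] fin finite_subset by blast
  have partof: "\<exists>p\<in>P. x \<in> p" if "x \<in> V" for x using that P3 by blast
  have cardVp: "card (V - p) = N - card p" if "p \<in> P" for p
    unfolding N_def using card_Diff_subset[OF pfin[OF that] pV[OF that]] .
  have modq: "c z x = c z y" if "p \<in> P" "z \<in> V - p" "x \<in> p" "y \<in> p" for p z x y
    using P4 that unfolding module_def by blast
  have cross2: "(c x z = r \<or> c x z = b) \<and> z \<noteq> x" if h: "p \<in> P" "x \<in> p" "z \<in> V - p" for p x z
  proof -
    obtain q where q: "q \<in> P" "z \<in> q" using partof h(3) by blast
    have "q \<noteq> p" using q h by blast
    then show ?thesis using P6 h(1,2) q h(3) by blast
  qed
  have step1: "card (nb V c x a) \<le> n + m"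
    if aa: "(a = r \<and> a' = b) \<or> (a = b \<and> a' = r)" and x: "x \<in> V" for a a' x
  proof (rule ccontr)
    assume "\<not> card (nb V c x a) \<le> n + m"
    then have cY: "card (nb V c x a) \<ge> n + m + 1" by simp
    define Y where "Y = nb V c x a"
    have lowY: "card (nb V c y a) \<le> m" if y: "y \<in> Y" for y
    proof (rule ccontr)
      assume "\<not> ?thesis"
      then have "card (nb V c y a) \<ge> m + 1" by simp
      moreover have "y \<in> V" "x \<noteq> y" "c x y = a" using y unfolding Y_def nb_def by auto
      ultimately have "star_in n m V c" using star1[OF fin x, of y c a] cY by simp
      then show False using ns by simp
    qed
    have highY: "card (nb V c y a') \<ge> n + m + 1" if y: "y \<in> Y" for y
    proof -
      have yV: "y \<in> V" using y unfolding Y_def nb_def by auto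
      obtain p where p: "p \<in> P" "y \<in> p" using partof yV by blast
      have sub: "(V - p) - nb V c y a \<subseteq> nb V c y a'"
      proof
        fix z assume z: "z \<in> (V - p) - nb V c y a"
        have "(c y z = r \<or> c y z = b) \<and> z \<noteq> y" using cross2[OF p] z by blast
        moreover have "\<not> (z \<noteq> y \<and> c y z = a)" using z unfolding nb_def by auto
        ultimately show "z \<in> nb V c y a'" using aa z unfolding nb_def by auto
      qed
      have "card (V - p) - card (nb V c y a) \<le> card ((V - p) - nb V c y a)"
        by (rule diff_card_le_card_Diff) (simp add: nb_fin[OF fin])
      also have "\<dots> \<le> card (nb V c y a')" by (rule card_mono[OF nb_fin[OF fin] sub])
      finally have "card (V - p) - card (nb V c y a) \<le> card (nb V c y a')" .
      moreover have "card (V - p) = N - card p" using cardVp[OF p(1)] .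
      moreover have "card p \<le> n" using small p(1) by blast
      moreover have "card (nb V c y a) \<le> m" using lowY[OF y] .
      ultimately show ?thesis using big unfolding N_def by linarith
    qed
    have crossY: "c y y' = a" if yy: "y \<in> Y" "y' \<in> Y" "p \<in> P" "y \<in> p" "y' \<notin> p" for y y' p
    proof (rule ccontr)
      assume ne: "c y y' \<noteq> a"
      have "y' \<in> V" using yy unfolding Y_def nb_def by auto
      then have "(c y y' = r \<or> c y y' = b) \<and> y' \<noteq> y" using cross2[OF yy(3,4)] yy(5) by blast
      then have "c y y' = a'" "y \<noteq> y'" using ne aa by auto
      moreover have "y \<in> V" "y' \<in> V" using yy unfolding Y_def nb_def by auto
      ultimately have "star_in n m V c"
        using star1[OF fin, of y y' c a' n m] highY[OF yy(1)] highY[OF yy(2)] by simp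
      then show False using ns by simp
    qed
    have "Y \<noteq> {}" using cY unfolding Y_def by auto
    then obtain y where y: "y \<in> Y" by blast
    have yV: "y \<in> V" "x \<noteq> y" "c x y = a" using y unfolding Y_def nb_def by auto
    obtain p where p: "p \<in> P" "y \<in> p" using partof yV(1) by blast
    have sub: "insert x (Y - p) \<subseteq> nb V c y a"
    proof
      fix z assume z: "z \<in> insert x (Y - p)"
      show "z \<in> nb V c y a"
      proof (cases "z = x")
        case True
        then show ?thesis using yV x gal_sym[OF g x yV(1) yV(2)] unfolding nb_def by auto
      next
        case False
        then have "z \<in> Y" "z \<notin> p" using z by auto
        then have "c y z = a" using crossY[OF y _ p] by blast
        moreover have "z \<in> V" using \<open>z \<in> Y\<close> unfolding Y_def nb_def by auto
        moreover have "z \<noteq> y" using \<open>z \<notin> p\<close> p(2) by auto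
        ultimately show ?thesis unfolding nb_def by auto
      qed
    qed
    have finY: "finite Y" unfolding Y_def using nb_fin[OF fin] .
    have "x \<notin> Y" unfolding Y_def nb_def by auto
    then have "card (insert x (Y - p)) = Suc (card (Y - p))" using finY by simp
    moreover have "card Y - card p \<le> card (Y - p)" by (rule diff_card_le_card_Diff) (rule pfin[OF p(1)])
    moreover have "card (insert x (Y - p)) \<le> card (nb V c y a)" by (rule card_mono[OF nb_fin[OF fin] sub])
    moreover have "card p \<le> n" using small p(1) by blast
    ultimately have "card (nb V c y a) \<ge> m + 2" using cY unfolding Y_def by linarith
    then show False using lowY[OF y] by simp
  qed
  have psize: "card p \<ge> m + 1" if p: "p \<in> P" for p
  proof -
    obtain x where x: "x \<in> p" using P4 p by blast
    have xV: "x \<in> V" using x pV[OF p] by blast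
    have "V - p \<subseteq> nb V c x r \<union> nb V c x b"
      using cross2[OF p x] unfolding nb_def by auto
    then have "card (V - p) \<le> card (nb V c x r \<union> nb V c x b)" by (simp add: card_mono nb_fin[OF fin])
    also have "\<dots> \<le> card (nb V c x r) + card (nb V c x b)" by (rule card_Un_le)
    finally have "card (V - p) \<le> 2 * n + 2 * m" using step1[of r b, OF _ xV] step1[of b r, OF _ xV] by simp
    then show ?thesis using cardVp[OF p] big unfolding N_def by linarith
  qed
  have Xb: "card {z \<in> V - p. c x z = a} \<le> n" if p: "p \<in> P" and x: "x \<in> p" and a: "a = r \<or> a = b" for p x a
  proof (rule ccontr)
    define X where "X = {z \<in> V - p. c x z = a}"
    assume "\<not> ?thesis"
    then have cX: "card X \<ge> n + 1" unfolding X_def by simp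
    then have "X \<noteq> {}" by auto
    then obtain y where y: "y \<in> X" by blast
    have xV: "x \<in> V" using x pV[OF p] by blast
    have yV: "y \<in> V" "y \<notin> p" "c x y = a" using y unfolding X_def by auto
    have "x \<noteq> y" using x yV(2) by auto
    have finX: "finite X" unfolding X_def using fin by simp
    have "star_in n m V c"
    proof (rule star2[where c=c and i=a and A'="X - {y}" and B'="p - {x}", OF fin xV yV(1) \<open>x \<noteq> y\<close> yV(3)])
      show "X - {y} \<subseteq> V" unfolding X_def by auto
      show "p - {x} \<subseteq> V" using pV[OF p] by auto
      show "\<forall>a'\<in>X - {y}. c x a' = a" unfolding X_def by auto
      show "\<forall>b'\<in>p - {x}. c y b' = a"
      proof
        fix b' assume b': "b' \<in> p - {x}"
        have "c y b' = c y x" using modq[OF p _ _ x] yV b' by blast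
        also have "\<dots> = c x y" using gal_sym[OF g yV(1) xV] \<open>x \<noteq> y\<close> by auto
        finally show "c y b' = a" using yV(3) by simp
      qed
      show "(X - {y}) \<inter> (p - {x}) = {}" unfolding X_def by auto
      show "x \<notin> (X - {y}) \<union> (p - {x})" using x unfolding X_def by auto
      show "y \<notin> (X - {y}) \<union> (p - {x})" using yV(2) by auto
      show "card (X - {y}) \<ge> n" using cX finX y by simp
      show "card (p - {x}) \<ge> m" using psize[OF p] pfin[OF p] x by simp
    qed
    then show False using ns by simp
  qed
  have psize2: "card p + 2 * n \<ge> N" if p: "p \<in> P" for p
  proof -
    obtain x where x: "x \<in> p" using P4 p by blast
    have "V - p \<subseteq> {z \<in> V - p. c x z = r} \<union> {z \<in> V - p. c x z = b}"
      using cross2[OF p x] by auto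
    then have "card (V - p) \<le> card ({z \<in> V - p. c x z = r} \<union> {z \<in> V - p. c x z = b})"
      using fin by (simp add: card_mono)
    also have "\<dots> \<le> card {z \<in> V - p. c x z = r} + card {z \<in> V - p. c x z = b}" by (rule card_Un_le)
    finally have "card (V - p) \<le> 2 * n" using Xb[OF p x, of r] Xb[OF p x, of b] by simp
    then show ?thesis using cardVp[OF p] by linarith
  qed
  have three: False if pq: "p \<in> P" "q \<in> P" "q' \<in> P" "p \<noteq> q" "p \<noteq> q'" "q \<noteq> q'"
    and xy: "x \<in> p" "y \<in> q" "y' \<in> q'" "c x y = c x y'" for p q q' x y y'
  proof -
    have "x \<in> V - q" using xy(1) pq P5 pV by blast
    have "x \<in> V - q'" using xy(1) pq P5 pV by blast
    define a where "a = c x y"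
    have a: "a = r \<or> a = b" unfolding a_def using P6 pq xy by blast
    have "q \<union> q' \<subseteq> {z \<in> V - p. c x z = a}"
    proof
      fix z assume z: "z \<in> q \<union> q'"
      show "z \<in> {z \<in> V - p. c x z = a}"
      proof (cases "z \<in> q")
        case True
        have "c x z = c x y" using modq[OF pq(2) \<open>x \<in> V - q\<close> True xy(2)] .
        moreover have "z \<in> V - p" using True pq P5 pV by blast
        ultimately show ?thesis unfolding a_def by simp
      next
        case False
        then have zq: "z \<in> q'" using z by blast
        have "c x z = c x y'" using modq[OF pq(3) \<open>x \<in> V - q'\<close> zq xy(3)] .
        moreover have "z \<in> V - p" using zq pq P5 pV by blast
        ultimately show ?thesis unfolding a_def using xy(4) by simp
      qed
    qed
    then have "card (q \<union> q') \<le> card {z \<in> V - p. c x z = a}" using fin by (simp add: card_mono)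
    also have "\<dots> \<le> n" using Xb[OF pq(1) xy(1) a] .
    finally have "card (q \<union> q') \<le> n" .
    moreover have "card (q \<union> q') = card q + card q'"
      using card_Un_disjoint[OF pfin[OF pq(2)] pfin[OF pq(3)]] P5 pq by blast
    ultimately show False using psize2[OF pq(2)] psize2[OF pq(3)] big nm unfolding N_def by linarith
  qed
  obtain p1 p2 where p12: "p1 \<in> P" "p2 \<in> P" "p1 \<noteq> p2" using two_elems[OF P2] by blast
  show False
  proof (cases "\<exists>p3\<in>P. p3 \<noteq> p1 \<and> p3 \<noteq> p2")
    case True
    then obtain p3 where p3: "p3 \<in> P" "p3 \<noteq> p1" "p3 \<noteq> p2" by blast
    obtain x1 where x1: "x1 \<in> p1" using P4 p12 by blast
    obtain x2 where x2: "x2 \<in> p2" using P4 p12 by blast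
    obtain x3 where x3: "x3 \<in> p3" using P4 p3 by blast
    have V: "x1 \<in> V" "x2 \<in> V" "x3 \<in> V" using x1 x2 x3 pV p12 p3 by blast+
    have ne: "x1 \<noteq> x2" "x1 \<noteq> x3" "x2 \<noteq> x3" using x1 x2 x3 p12 p3 P5 by blast+
    have c12: "c x1 x2 = r \<or> c x1 x2 = b" using P6 p12 x1 x2 by blast
    have c13: "c x1 x3 = r \<or> c x1 x3 = b" using P6 p12 p3 x1 x3 by blast
    have c23: "c x2 x3 = r \<or> c x2 x3 = b" using P6 p12 p3 x2 x3 by blast
    have s12: "c x2 x1 = c x1 x2" using gal_sym[OF g V(1,2) ne(1)] by simp
    have s13: "c x3 x1 = c x1 x3" using gal_sym[OF g V(1,3) ne(2)] by simp
    have s23: "c x3 x2 = c x2 x3" using gal_sym[OF g V(2,3) ne(3)] by simp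
    show False
    proof (cases "c x1 x2 = c x1 x3")
      case True
      then show False using three[OF p12(1,2) p3(1) p12(3) p3(2)[symmetric] p3(3)[symmetric] x1 x2 x3] by simp
    next
      case f1: False
      show False
      proof (cases "c x1 x2 = c x2 x3")
        case True
        then show False using three[OF p12(2,1) p3(1) p12(3)[symmetric] p3(3)[symmetric] p3(2)[symmetric] x2 x1 x3] s12 by simp
      next
        case False
        then have "c x1 x3 = c x2 x3" using f1 c12 c13 c23 by auto
        then show False using three[OF p3(1) p12(1,2) p3(2) p3(3) p12(3) x3 x1 x2] s13 s23 by simp
      qed
    qed
  next
    case False
    then have "V = p1 \<union> p2" using P3 p12 by blast
    then have "N \<le> card p1 + card p2" unfolding N_def by (simp add: card_Un_le)
    moreover have "card p1 \<le> n" "card p2 \<le> n" using small p12 by auto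
    ultimately show False using big unfolding N_def by linarith
  qed
qed



lemma main:
  assumes "finite V" "gal V c" "\<forall>x\<in>V. \<forall>y\<in>V. x \<noteq> y \<longrightarrow> c x y < k" "\<not> star_in n m V c"
    "R \<subseteq> {0..<k}" "\<forall>i\<in>R. \<forall>x\<in>V. card (nb V c x i) \<le> m - 1" "m \<ge> 1" "m \<le> n" "n \<le> 6*m+6"
  shows "card V \<le> (k - card R) * m + (2*n+3*m+3)"
  using assms
proof (induction "card V" arbitrary: V R rule: less_induct)
  case less
  note fin = less.prems(1) and g = less.prems(2) and col = less.prems(3) and ns = less.prems(4)
    and Rk = less.prems(5) and Rres = less.prems(6) and m1 = less.prems(7) and mn = less.prems(8)
    and nm = less.prems(9)
  have finR: "finite R" using Rk finite_subset by blast
  have cRk: "card R \<le> k" using card_mono[OF _ Rk] by simp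
  show ?case
  proof (cases "\<exists>W. W \<subset> V \<and> module V c W \<and> card W \<ge> n + 1")
    case True
    then obtain W where W: "W \<subset> V" "module V c W" "card W \<ge> n + 1" by blast
    have finW: "finite W" using W(1) fin finite_subset by blast
    have WV: "W \<subseteq> V" using W(1) by blast
    have "W \<noteq> {}" using W(3) by auto
    then obtain w0 where w0: "w0 \<in> W" by blast
    have w0V: "w0 \<in> V" using w0 WV by blast
    define T where "T = V - W"
    have finT: "finite T" unfolding T_def using fin by simp
    define col where "col z = c z w0" for z
    have modW: "c z x = col z" if "z \<in> T" "x \<in> W" for z x
      using W(2) that w0 unfolding module_def col_def T_def by blast
    define J where "J = col ` T"
    define Ti where "Ti i = {z \<in> T. col z = i}" for i
    have TV: "T \<subseteq> V" unfolding T_def by blast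
    have cardTi: "card (Ti i) \<le> m" for i
    proof (rule ccontr)
      assume "\<not> ?thesis"
      then have cT: "card (Ti i) \<ge> m + 1" by simp
      then have "Ti i \<noteq> {}" by auto
      then obtain y where y: "y \<in> Ti i" by blast
      have yT: "y \<in> T" "col y = i" using y unfolding Ti_def by auto
      have yV: "y \<in> V" using yT TV by blast
      have "y \<noteq> w0" using yT w0 unfolding T_def by blast
      have finTi: "finite (Ti i)" unfolding Ti_def using finT by simp
      have "star_in n m V c"
      proof (rule star2[where c=c and i=i and A'="W - {w0}" and B'="Ti i - {y}", OF fin yV w0V \<open>y \<noteq> w0\<close>])
        show "c y w0 = i" using yT unfolding col_def by simp
        show "W - {w0} \<subseteq> V" using WV by blast
        show "Ti i - {y} \<subseteq> V" using TV unfolding Ti_def by blast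
        show "\<forall>a\<in>W - {w0}. c y a = i" using modW yT by auto
        show "\<forall>b\<in>Ti i - {y}. c w0 b = i"
        proof
          fix b assume b: "b \<in> Ti i - {y}"
          then have bT: "b \<in> T" "col b = i" unfolding Ti_def by auto
          then have "b \<noteq> w0" "b \<in> V" using w0 TV unfolding T_def by auto
          then have "c w0 b = c b w0" using gal_sym[OF g w0V] by metis
          then show "c w0 b = i" using bT unfolding col_def by simp
        qed
        show "(W - {w0}) \<inter> (Ti i - {y}) = {}" unfolding Ti_def T_def by blast
        show "y \<notin> (W - {w0}) \<union> (Ti i - {y})" using yT unfolding T_def by blast
        show "w0 \<notin> (W - {w0}) \<union> (Ti i - {y})" using w0 unfolding Ti_def T_def by blast
        show "card (W - {w0}) \<ge> n" using W(3) finW w0 by simp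
        show "card (Ti i - {y}) \<ge> m" using cT finTi y by simp
      qed
      then show False using ns by simp
    qed
    have JR: "J \<inter> R = {}"
    proof (rule ccontr)
      assume "J \<inter> R \<noteq> {}"
      then obtain i where i: "i \<in> J" "i \<in> R" by blast
      then obtain y where y: "y \<in> T" "col y = i" unfolding J_def by blast
      have yV: "y \<in> V" using y TV by blast
      have "W \<subseteq> nb V c y i" using modW y WV unfolding nb_def T_def by auto
      then have "card W \<le> card (nb V c y i)" using card_mono[OF nb_fin[OF fin]] by blast
      also have "\<dots> \<le> m - 1" using Rres i(2) yV by blast
      finally show False using W(3) mn by linarith
    qed
    have Jk: "J \<subseteq> {0..<k}"
    proof
      fix i assume "i \<in> J"
      then obtain z where z: "z \<in> T" "i = col z" unfolding J_def by blast
      have "z \<noteq> w0" "z \<in> V" using z w0 TV unfolding T_def by auto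
      then show "i \<in> {0..<k}" using col w0V z unfolding col_def by auto
    qed
    have finJ: "finite J" unfolding J_def using finT by simp
    have cardT: "card T \<le> card J * m"
    proof -
      have "T = (\<Union>i\<in>J. Ti i)" unfolding J_def Ti_def by auto
      then have "card T \<le> (\<Sum>i\<in>J. card (Ti i))" using card_UN_le[OF finJ, of Ti] by simp
      also have "\<dots> \<le> card J * m" using sum_bounded_above[of J "\<lambda>i. card (Ti i)" m] cardTi by simp
      finally show ?thesis .
    qed
    have cJR: "card (J \<union> R) = card J + card R" using card_Un_disjoint[OF finJ finR JR] .
    have cJRk: "card J + card R \<le> k"
    proof -
      have "J \<union> R \<subseteq> {0..<k}" using Jk Rk by blast
      then have "card (J \<union> R) \<le> k" using card_mono[of "{0..<k}" "J \<union> R"] by simp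
      then show ?thesis using cJR by simp
    qed
    have cardV: "card V = card W + card T" unfolding T_def
      using card_Diff_subset[OF finW WV] card_mono[OF fin WV] by simp
    show ?thesis
    proof (cases "card W \<ge> n + m + 1")
      case True
      have restJ: "card (nb W c x i) \<le> m - 1" if i: "i \<in> J" and x: "x \<in> W" for i x
      proof (rule ccontr)
        assume "\<not> ?thesis"
        then have "card (nb W c x i) \<ge> m" using m1 by simp
        then obtain B0 where B0: "B0 \<subseteq> nb W c x i" "card B0 = m" using obtain_subset_with_card_n by metis
        obtain y where y: "y \<in> T" "col y = i" using i unfolding J_def by blast
        have yV: "y \<in> V" using y TV by blast
        have xV: "x \<in> V" using x WV by blast
        have "y \<noteq> x" using y x unfolding T_def by blast
        have finB0: "finite B0" using B0(2) m1 card.infinite by fastforce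
        have B0W: "B0 \<subseteq> W" using B0(1) unfolding nb_def by auto
        have "card (W - {x}) - card B0 \<le> card (W - {x} - B0)"
          by (rule diff_card_le_card_Diff[OF finB0])
        moreover have "card (W - {x}) = card W - 1" using finW x by simp
        ultimately have cA: "card (W - {x} - B0) \<ge> n" using True B0(2) by linarith
        have "star_in n m V c"
        proof (rule star2[where c=c and i=i and A'="W - {x} - B0" and B'=B0, OF fin yV xV \<open>y \<noteq> x\<close>])
          show "c y x = i" using modW y x by simp
          show "W - {x} - B0 \<subseteq> V" using WV by blast
          show "B0 \<subseteq> V" using B0W WV by blast
          show "\<forall>a\<in>W - {x} - B0. c y a = i" using modW y by auto
          show "\<forall>b\<in>B0. c x b = i" using B0(1) unfolding nb_def by auto
          show "(W - {x} - B0) \<inter> B0 = {}" by blast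
          show "y \<notin> (W - {x} - B0) \<union> B0" using y B0W unfolding T_def by blast
          show "x \<notin> (W - {x} - B0) \<union> B0" using B0(1) unfolding nb_def by auto
          show "card (W - {x} - B0) \<ge> n" using cA .
          show "card B0 \<ge> m" using B0(2) by simp
        qed
        then show False using ns by simp
      qed
      have ltW: "card W < card V" using psubset_card_mono[OF fin W(1)] .
      have IH: "card W \<le> (k - card (R \<union> J)) * m + (2*n+3*m+3)"
      proof (rule less.hyps[OF ltW finW])
        show "gal W c" using gal_subset[OF g WV] .
        show "\<forall>x\<in>W. \<forall>y\<in>W. x \<noteq> y \<longrightarrow> c x y < k" using col WV by blast
        show "\<not> star_in n m W c" using ns star_mono[OF _ WV] by blast
        show "R \<union> J \<subseteq> {0..<k}" using Rk Jk by blast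
        show "\<forall>i\<in>R \<union> J. \<forall>x\<in>W. card (nb W c x i) \<le> m - 1"
        proof (intro ballI)
          fix i x assume i: "i \<in> R \<union> J" and x: "x \<in> W"
          show "card (nb W c x i) \<le> m - 1"
          proof (cases "i \<in> R")
            case True
            have "nb W c x i \<subseteq> nb V c x i" using WV unfolding nb_def by auto
            then have "card (nb W c x i) \<le> card (nb V c x i)" using card_mono[OF nb_fin[OF fin]] by blast
            also have "\<dots> \<le> m - 1" using Rres True x WV by blast
            finally show ?thesis .
          next
            case False
            then show ?thesis using restJ i x by blast
          qed
        qed
      qed (use m1 mn nm in auto)
      have "card (R \<union> J) = card R + card J" using cJR by (simp add: Un_commute)
      then have IH': "card W \<le> (k - (card R + card J)) * m + (2*n+3*m+3)" using IH by simp
      obtain d where d: "k = card R + card J + d" using cJRk by (metis add.commute le_Suc_ex)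
      have "card V \<le> d * m + (2*n+3*m+3) + card J * m" using cardV cardT IH' d by simp
      also have "\<dots> = (k - card R) * m + (2*n+3*m+3)" using d by (simp add: algebra_simps)
      finally show ?thesis .
    next
      case False
      have "card J \<le> k - card R" using cJRk by simp
      then have "card J * m \<le> (k - card R) * m" by (rule mult_le_mono1)
      then show ?thesis using cardV cardT False by linarith
    qed
  next
    case False
    show ?thesis
    proof (cases "card V \<le> 2*n+3*m+3")
      case True
      then show ?thesis by simp
    next
      case big0: False
      then have big: "card V \<ge> 2*n+3*m+4" by simp
      have "card V \<ge> 2" using big by simp
      obtain P r b where P: "finite P" "card P \<ge> 2" "\<Union>P = V" "\<forall>p\<in>P. p \<noteq> {} \<and> module V c p"
        "\<forall>p\<in>P. \<forall>q\<in>P. p \<noteq> q \<longrightarrow> p \<inter> q = {}"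
        "\<forall>p\<in>P. \<forall>q\<in>P. p \<noteq> q \<longrightarrow> (\<forall>x\<in>p. \<forall>y\<in>q. c x y = r \<or> c x y = b)"
        using gallai_partition[OF fin \<open>card V \<ge> 2\<close> g] by (elim exE conjE) (rule that; assumption)
      have small: "\<forall>p\<in>P. card p \<le> n"
      proof
        fix p assume p: "p \<in> P"
        obtain p1 p2 where p12: "p1 \<in> P" "p2 \<in> P" "p1 \<noteq> p2" using two_elems[OF P(2)] by blast
        obtain q where q: "q \<in> P" "q \<noteq> p" using p12 by blast
        obtain z where z: "z \<in> q" using P(4) q(1) by blast
        have "z \<notin> p" using P(5) p q z by blast
        moreover have "z \<in> V" using P(3) q z by blast
        moreover have pm: "module V c p" using P(4) p by blast
        ultimately have "p \<subset> V" unfolding module_def by blast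
        then show "card p \<le> n" using False pm by force
      qed
      show ?thesis using core[OF fin g ns P small big nm] by simp
    qed
  qed
qed



lemma star_to_mono:
  assumes "star_in n m {0..<N} c" shows "has_mono_double_star n m N c"
proof -
  obtain u v A B i where h: "u \<in> {0..<N} \<and> v \<in> {0..<N} \<and> u \<noteq> v \<and> A \<subseteq> {0..<N} \<and> B \<subseteq> {0..<N} \<and>
     card A = n \<and> card B = m \<and> A \<inter> B = {} \<and> u \<notin> A \<union> B \<and> v \<notin> A \<union> B \<and>
     c u v = i \<and> (\<forall>a\<in>A. c u a = i) \<and> (\<forall>b\<in>B. c v b = i)" using assms unfolding star_in_def by blast
  show ?thesis unfolding has_mono_double_star_def
    apply (rule exI[where x=u], rule exI[where x=v], rule exI[where x=A], rule exI[where x=B], rule exI[where x=i])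
    using h by auto
qed

theorem proposition4:
  fixes n m k :: nat
  assumes "m \<ge> 1" and "n \<ge> m" and "k \<ge> 3" and "n \<le> 6 * m + 6"
  shows "gr_K3_double_star k n m \<le>
           (if even n then 2 * n + m * (k + 3) + 8 else 2 * n + m * (k + 3) + 9)"
proof -
  define N0 where "N0 = 2 * n + m * (k + 3) + 8"
  have hprop: "\<forall>c. kcoloring k N0 c \<longrightarrow> has_rainbow_K3 N0 c \<or> has_mono_double_star n m N0 c"
  proof (intro allI impI)
    fix c assume kc: "kcoloring k N0 c"
    show "has_rainbow_K3 N0 c \<or> has_mono_double_star n m N0 c"
    proof (rule ccontr)
      assume "\<not> ?thesis"
      then have nr: "\<not> has_rainbow_K3 N0 c" and nm: "\<not> has_mono_double_star n m N0 c" by auto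
      have g: "gal {0..<N0} c"
        unfolding gal_def
      proof (intro conjI ballI impI)
        fix x y assume "x \<in> {0..<N0}" "y \<in> {0..<N0}" "x \<noteq> y"
        then show "c x y = c y x" using kc unfolding kcoloring_def by auto
      next
        fix x y z assume "x \<in> {0..<N0}" "y \<in> {0..<N0}" "z \<in> {0..<N0}" "x \<noteq> y" "y \<noteq> z" "x \<noteq> z"
        then show "c x y = c y z \<or> c y z = c x z \<or> c x y = c x z"
          using nr unfolding has_rainbow_K3_def by auto
      qed
      have ck: "\<forall>x\<in>{0..<N0}. \<forall>y\<in>{0..<N0}. x \<noteq> y \<longrightarrow> c x y < k" using kc unfolding kcoloring_def by auto
      have ns: "\<not> star_in n m {0..<N0} c" using nm star_to_mono by blast
      have "card {0..<N0} \<le> (k - card {}) * m + (2*n+3*m+3)"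
        using main[OF _ g ck ns, of "{}"] assms by simp
      then show False unfolding N0_def by (simp add: algebra_simps)
    qed
  qed
  have "gr_K3_double_star k n m \<le> N0"
    unfolding gr_K3_double_star_def by (rule Least_le) (rule hprop)
  then show ?thesis unfolding N0_def by simp
qed

end
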